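(* Let $z,a,b,c,n,m,p,q,r$ be positive integers and $$M=\begin{pmatrix} z & a & b\\ c & n & m\\ p & q & r\end{pmatrix}.$$ If $z\geq 1$, $n>ac$, $r>bp$, $m\geq bc$ and $q\geq ap$, then $\mathrm{Cat}(M)\neq\emptyset$.
   Context: For an $n\times n$ matrix $M=(m_{ij})$ with entries in the natural numbers, $\mathrm{Cat}(M)$ denotes the collection of categories $A$ with exactly $n$ distinct objects $x_1,\dots,x_n$ such that $|A(x_i,x_j)|=m_{ij}$ for all $i,j$, where $A(x_i,x_j)$ is the set of morphisms from $x_i$ to $x_j$. The paper considers matrices with strictly positive entries. *)

theory Defs
  imports Main
begin

text \<open>A (small) category with objects 0,...,n-1 (the objects x_1..x_n of the paper,
  indexed from 0), given by hom-sets hom i j, composition cmp i j k g f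
  (g after f, for f : i -> j and g : j -> k) and identities ident i.\<close>

definition is_category_on ::
  "nat \<Rightarrow> (nat \<Rightarrow> nat \<Rightarrow> 'm set) \<Rightarrow> (nat \<Rightarrow> nat \<Rightarrow> nat \<Rightarrow> 'm \<Rightarrow> 'm \<Rightarrow> 'm) \<Rightarrow> (nat \<Rightarrow> 'm) \<Rightarrow> bool"
where
  "is_category_on n hom cmp ident \<longleftrightarrow>
     (\<forall>i<n. ident i \<in> hom i i) \<and>
     (\<forall>i<n. \<forall>j<n. \<forall>k<n. \<forall>f\<in>hom i j. \<forall>g\<in>hom j k. cmp i j k g f \<in> hom i k) \<and>
     (\<forall>i<n. \<forall>j<n. \<forall>f\<in>hom i j. cmp i j j (ident j) f = f \<and> cmp i i j f (ident i) = f) \<and>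
     (\<forall>i<n. \<forall>j<n. \<forall>k<n. \<forall>l<n. \<forall>f\<in>hom i j. \<forall>g\<in>hom j k. \<forall>h\<in>hom k l.
        cmp i k l h (cmp i j k g f) = cmp i j l (cmp j k l h g) f)"

text \<open>Morphisms are represented by natural numbers; any category with finite hom-sets
  is isomorphic to such a one.\<close>

definition Cat_nonempty :: "nat \<Rightarrow> (nat \<Rightarrow> nat \<Rightarrow> nat) \<Rightarrow> bool" where
  "Cat_nonempty n M \<longleftrightarrow>
     (\<exists>(hom :: nat \<Rightarrow> nat \<Rightarrow> nat set) cmp ident.
        is_category_on n hom cmp ident \<and>
        (\<forall>i<n. \<forall>j<n. finite (hom i j) \<and> card (hom i j) = M i j))"

definition mat3 :: "nat \<Rightarrow> nat \<Rightarrow> nat \<Rightarrow> nat \<Rightarrow> nat \<Rightarrow> nat \<Rightarrow> nat \<Rightarrow> nat \<Rightarrow> nat \<Rightarrow> nat \<Rightarrow> nat \<Rightarrow> nat" where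
  "mat3 z a b c n m p q r = (\<lambda>i j. [[z, a, b], [c, n, m], [p, q, r]] ! i ! j)"

end

theory Submission
  imports Defs "HOL-Library.Countable"
begin

datatype mor = Id | K nat nat | E nat

instance mor :: countable by countable_datatype

fun sig :: "mor \<Rightarrow> nat" where
  "sig (K s t) = s" | "sig _ = 0"
fun tau :: "mor \<Rightarrow> nat" where
  "tau (K s t) = t" | "tau _ = 0"

definition op :: "mor \<Rightarrow> mor \<Rightarrow> mor" where
  "op g f = (if f = Id then g else if g = Id then f else K (sig f) (tau g))"

lemma op_assoc: "op h (op g f) = op (op h g) f"
  by (cases f; cases g; cases h) (auto simp: op_def)

lemma transfer_cat:
  fixes g :: "'a \<Rightarrow> nat"
  assumes "is_category_on N hom cmp ident" "inj g"
  shows "is_category_on N (\<lambda>i j. g ` hom i j) (\<lambda>i j k y x. g (cmp i j k (inv g y) (inv g x))) (\<lambda>i. g (ident i))"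
  using assms unfolding is_category_on_def by (auto simp: inv_f_f)

lemma gen:
  fixes N :: nat and M :: "nat \<Rightarrow> nat \<Rightarrow> nat" and sS tT :: "nat \<Rightarrow> nat" and D :: "nat set"
  assumes pos: "\<forall>i<N. sS i > 0 \<and> tT i > 0"
    and bound: "\<forall>i<N. \<forall>j<N. sS i * tT j + (if i = j \<and> i \<in> D then 1 else 0) \<le> M i j"
    and nd: "\<forall>i<N. i \<notin> D \<longrightarrow> sS i = 1 \<and> tT i = 1 \<and> (\<forall>k<N. M k i = sS k \<and> M i k = tT k)"
  shows "Cat_nonempty N M"
proof -
  define d where "d i j = (if i = j \<and> i \<in> D then 1 else (0::nat))" for i j
  define hom where "hom i j = (\<lambda>(s,t). K s t) ` ({..<sS i} \<times> {..<tT j}) \<union> E ` {..< M i j - sS i * tT j - d i j}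
     \<union> (if d i j = 1 then {Id} else {})" for i j
  define cmp where "cmp (i::nat) (j::nat) (k::nat) g f = op g f" for i j k g f
  define ident where "ident i = (if i \<in> D then Id else K 0 0)" for i
  have cat: "is_category_on N hom cmp ident"
    unfolding is_category_on_def
  proof (intro conjI allI impI ballI)
    fix i assume "i < N" then show "ident i \<in> hom i i"
      using nd pos by (auto simp: ident_def hom_def d_def)
  next
    fix i j k f g assume ijk: "i < N" "j < N" "k < N" and f: "f \<in> hom i j" and g: "g \<in> hom j k"
    show "cmp i j k g f \<in> hom i k"
    proof (cases "f = Id")
      case True then have "i = j" using f by (auto simp: hom_def d_def split: if_splits)
      then show ?thesis using True g by (simp add: cmp_def op_def)
    next
      case fI: False show ?thesis
      proof (cases "g = Id")
        case True then have "j = k" using g by (auto simp: hom_def d_def split: if_splits)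
        then show ?thesis using True f fI by (simp add: cmp_def op_def)
      next
        case False
        have "sig f < sS i" using f fI pos ijk by (auto simp: hom_def split: if_splits)
        moreover have "tau g < tT k" using g False pos ijk by (auto simp: hom_def split: if_splits)
        ultimately show ?thesis using fI False by (auto simp: cmp_def op_def hom_def)
      qed
    qed
  next
    fix i j f assume ij: "i < N" "j < N" and f: "f \<in> hom i j"
    show "cmp i j j (ident j) f = f"
    proof (cases "j \<in> D")
      case True then show ?thesis by (simp add: cmp_def ident_def op_def)
    next
      case False
      then have "sS j = 1" "tT j = 1" "M i j = sS i" "i = j \<longrightarrow> sS i = 1" using nd ij by auto
      then have e: "M i j - sS i * tT j - d i j = 0" "d i j = 0" "M i j - sS i * tT j = 0" using False by (auto simp: d_def)
      have "f \<in> (\<lambda>(s,t). K s t) ` ({..<sS i} \<times> {..<tT j})" using f e unfolding hom_def by simp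
      then have "f \<in> (\<lambda>(s,t). K s t) ` ({..<sS i} \<times> {..<1})" using \<open>tT j = 1\<close> by simp
      then show ?thesis by (auto simp: cmp_def ident_def op_def False)
    qed
    show "cmp i i j f (ident i) = f"
    proof (cases "i \<in> D")
      case True then show ?thesis by (simp add: cmp_def ident_def op_def)
    next
      case False
      then have "sS i = 1" "tT i = 1" "M i j = tT j" "i = j \<longrightarrow> tT j = 1" using nd ij by auto
      then have e: "M i j - sS i * tT j - d i j = 0" "d i j = 0" "M i j - sS i * tT j = 0" using False by (auto simp: d_def)
      have "f \<in> (\<lambda>(s,t). K s t) ` ({..<sS i} \<times> {..<tT j})" using f e unfolding hom_def by simp
      then have "f \<in> (\<lambda>(s,t). K s t) ` ({..<1} \<times> {..<tT j})" using \<open>sS i = 1\<close> by simp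
      then show ?thesis by (auto simp: cmp_def ident_def op_def False)
    qed
  next
    fix i j k l f g h
    show "cmp i k l h (cmp i j k g f) = cmp i j l (cmp j k l h g) f"
      by (simp add: cmp_def op_assoc)
  qed
  have card: "finite (hom i j) \<and> card (hom i j) = M i j" if "i < N" "j < N" for i j
  proof -
    let ?A = "(\<lambda>(s,t). K s t) ` ({..<sS i} \<times> {..<tT j})"
    let ?B = "E ` {..< M i j - sS i * tT j - d i j}"
    let ?C = "(if d i j = 1 then {Id} else {})"
    have cA: "card ?A = sS i * tT j"
      by (subst card_image) (auto simp: inj_on_def)
    have cB: "card ?B = M i j - sS i * tT j - d i j"
      by (subst card_image) (auto simp: inj_on_def)
    have cC: "card ?C = d i j" by (simp add: d_def)
    have le: "sS i * tT j + d i j \<le> M i j" using bound that by (simp add: d_def)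
    have "card (?A \<union> ?B \<union> ?C) = card (?A \<union> ?B) + card ?C"
      by (rule card_Un_disjoint) auto
    also have "card (?A \<union> ?B) = card ?A + card ?B"
      by (rule card_Un_disjoint) auto
    finally have "card (hom i j) = M i j" unfolding hom_def using cA cB cC le by simp
    then show ?thesis by (simp add: hom_def)
  qed
  show ?thesis
    unfolding Cat_nonempty_def
    apply (rule exI[of _ "\<lambda>i j. to_nat ` hom i j"])
    apply (rule exI[of _ "\<lambda>i j k y x. to_nat (cmp i j k (inv to_nat y) (inv to_nat x))"])
    apply (rule exI[of _ "\<lambda>i. to_nat (ident i)"])
    using transfer_cat[OF cat inj_to_nat] card by (auto simp: card_image inj_on_def)
qed

lemma all3: "(\<forall>i<(3::nat). P i) \<longleftrightarrow> P 0 \<and> P 1 \<and> P 2"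
  by (auto simp: less_Suc_eq numeral_3_eq_3 numeral_2_eq_2)

lemma mat3_vals: "mat3 z a b c n m p q r 0 0 = z" "mat3 z a b c n m p q r 0 1 = a" "mat3 z a b c n m p q r 0 2 = b"
  "mat3 z a b c n m p q r 1 0 = c" "mat3 z a b c n m p q r 1 1 = n" "mat3 z a b c n m p q r 1 2 = m"
  "mat3 z a b c n m p q r 2 0 = p" "mat3 z a b c n m p q r 2 1 = q" "mat3 z a b c n m p q r 2 2 = r"
  by (simp_all add: mat3_def numeral_2_eq_2)

theorem mainTheorem5:
  fixes z a b c n m p q r :: nat
  assumes "z > 0" "a > 0" "b > 0" "c > 0" "n > 0" "m > 0" "p > 0" "q > 0" "r > 0"
    and "z \<ge> 1" "n > a * c" "r > b * p" "m \<ge> b * c" "q \<ge> a * p"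
  shows "Cat_nonempty 3 (mat3 z a b c n m p q r)"
proof (rule gen[where sS = "\<lambda>i. if i = 0 then 1 else if i = 1 then c else p"
      and tT = "\<lambda>i. if i = 0 then 1 else if i = 1 then a else b"
      and D = "if z = 1 then {1,2} else {0,1,2}"])
  have three: "\<And>i::nat. i < 3 \<longleftrightarrow> i = 0 \<or> i = 1 \<or> i = 2" by auto
  show "\<forall>i<3. (if i = 0 then 1 else if i = 1 then c else p) > 0 \<and> (if i = 0 then 1 else if i = 1 then a else b) > (0::nat)"
    unfolding all3 using assms by simp
  show "\<forall>i<3. \<forall>j<3. (if i = 0 then 1 else if i = 1 then c else p) * (if j = 0 then 1 else if j = 1 then a else b)
     + (if i = j \<and> i \<in> (if z = 1 then {1,2} else {0,1,2}) then 1 else 0) \<le> mat3 z a b c n m p q r i j"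
    unfolding all3 using assms by (simp add: mat3_def numeral_2_eq_2 mult.commute)
  show "\<forall>i<3. i \<notin> (if z = 1 then {1,2} else {0,1,2}) \<longrightarrow>
     (if i = 0 then 1 else if i = 1 then c else p) = 1 \<and> (if i = 0 then 1 else if i = 1 then a else b) = 1 \<and>
     (\<forall>k<3. mat3 z a b c n m p q r k i = (if k = 0 then 1 else if k = 1 then c else p) \<and>
            mat3 z a b c n m p q r i k = (if k = 0 then 1 else if k = 1 then a else b))"
    unfolding all3 using assms by (simp add: mat3_def numeral_2_eq_2)
qed

end
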